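(* Fix $m\ge1$ and consider the game for SumLoss with top-1 feedback and binary relevance, with loss matrix $L$ as in the context. Then every learner action $\sigma_i$, $i\in[m!]$, is Pareto-optimal.
   Context: Objects are $\{1,\dots,m\}$. Learner actions are the permutations $\sigma_1,\dots,\sigma_{m!}$ of $[m]$ ($\sigma(i)$ = rank of object $i$); adversary actions are the relevance vectors $r_1,\dots,r_{2^m}$ enumerating $\{0,1\}^m$. The loss matrix $L\in\mathbb{R}^{m!\times 2^m}$ has $L_{i,j}=\sum_{k=1}^m\sigma_i(k)r_j(k)$, with rows $\ell_i\in\mathbb{R}^{2^m}$. Let $\Delta=\{p\in\mathbb{R}^{2^m}:p_i\ge0,\sum_ip_i=1\}$. Action $i$ is optimal under $p\in\Delta$ if $\ell_i\cdot p\le\ell_j\cdot p$ for all $j$. The cell of action $i$ is $C_i=\{p\in\Delta: \text{action } i \text{ is optimal under } p\}$. Action $i$ is Pareto-optimal if $C_i$ is non-empty and $(2^m-1)$-dimensional. *)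

theory Defs
  imports "HOL-Analysis.Analysis"
begin

text \<open>Objects are the elements of a finite type 'n (m = CARD('n)).
 A learner action is a ranking sigma : 'n -> {1..m}, bijective (sigma i = rank of object i).
 Adversary actions are relevance vectors r : 'n -> bool, i.e. elements of {0,1}^m.\<close>

definition rankings :: "('n::finite \<Rightarrow> nat) set" where
  "rankings = {\<sigma>. bij_betw \<sigma> UNIV {1..CARD('n)}}"

definition loss_row :: "('n::finite \<Rightarrow> nat) \<Rightarrow> real ^ ('n \<Rightarrow> bool)" where
  "loss_row \<sigma> = (\<chi> r. \<Sum>k\<in>UNIV. real (\<sigma> k) * (if r k then 1 else 0))"

definition prob_simplex :: "(real ^ ('n::finite \<Rightarrow> bool)) set" where
  "prob_simplex = {p. (\<forall>r. 0 \<le> p $ r) \<and> (\<Sum>r\<in>UNIV. p $ r) = 1}"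

definition cell :: "('n::finite \<Rightarrow> nat) \<Rightarrow> (real ^ ('n \<Rightarrow> bool)) set" where
  "cell \<sigma> = {p \<in> prob_simplex. \<forall>\<tau>\<in>rankings. loss_row \<sigma> \<bullet> p \<le> loss_row \<tau> \<bullet> p}"

definition pareto_optimal :: "('n::finite \<Rightarrow> nat) \<Rightarrow> bool" where
  "pareto_optimal \<sigma> \<longleftrightarrow> cell \<sigma> \<noteq> {} \<and> aff_dim (cell \<sigma>) = int (2 ^ CARD('n)) - 1"

end

theory Submission
  imports Defs "HOL-Library.Cardinality"
begin

lemma loss_expand:
  "loss_row \<tau> \<bullet> p = (\<Sum>k\<in>UNIV. real (\<tau> k) * (\<Sum>r\<in>UNIV. if r k then p $ r else 0))"
proof -
  have "loss_row \<tau> \<bullet> p = (\<Sum>r\<in>UNIV. (\<Sum>k\<in>UNIV. real (\<tau> k) * (if r k then 1 else 0)) * p $ r)"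
    by (simp add: loss_row_def inner_vec_def)
  also have "\<dots> = (\<Sum>r\<in>UNIV. \<Sum>k\<in>UNIV. real (\<tau> k) * (if r k then 1 else 0) * p $ r)"
    by (simp add: sum_distrib_right)
  also have "\<dots> = (\<Sum>r\<in>UNIV. \<Sum>k\<in>UNIV. real (\<tau> k) * (if r k then p $ r else 0))"
    by (rule sum.cong[OF refl], rule sum.cong[OF refl]) simp
  also have "\<dots> = (\<Sum>k\<in>UNIV. \<Sum>r\<in>UNIV. real (\<tau> k) * (if r k then p $ r else 0))"
    by (rule sum.swap)
  also have "\<dots> = (\<Sum>k\<in>UNIV. real (\<tau> k) * (\<Sum>r\<in>UNIV. if r k then p $ r else 0))"
    by (simp add: sum_distrib_left)
  finally show ?thesis .
qed

lemma rank_sum: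
  fixes \<tau> :: "'n::finite \<Rightarrow> nat"
  assumes "\<tau> \<in> rankings"
  shows "(\<Sum>k\<in>UNIV. g (\<tau> k)) = (\<Sum>i\<in>{1..CARD('n)}. g i)"
  using assms unfolding rankings_def by (simp add: sum.reindex_bij_betw)

lemma rank_range:
  fixes \<tau> :: "'n::finite \<Rightarrow> nat"
  assumes "\<tau> \<in> rankings"
  shows "\<tau> k \<in> {1..CARD('n)}"
  using assms unfolding rankings_def bij_betw_def by auto

lemma rank_ineq:
  fixes \<tau> \<sigma> :: "'n::finite \<Rightarrow> nat"
  assumes "\<tau> \<in> rankings" "\<sigma> \<in> rankings" "\<tau> \<noteq> \<sigma>"
  shows "(\<Sum>k\<in>UNIV. real (\<tau> k) * real (\<sigma> k)) < (\<Sum>k\<in>UNIV. real (\<sigma> k) * real (\<sigma> k))"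
proof -
  obtain k0 where k0: "\<tau> k0 \<noteq> \<sigma> k0" using assms(3) by auto
  have "0 < (\<Sum>k\<in>UNIV. (real (\<sigma> k) - real (\<tau> k))^2)"
    by (rule sum_pos2[of UNIV k0]) (use k0 in auto)
  also have "\<dots> = (\<Sum>k\<in>UNIV. real (\<sigma> k) * real (\<sigma> k)) - 2 * (\<Sum>k\<in>UNIV. real (\<tau> k) * real (\<sigma> k))
      + (\<Sum>k\<in>UNIV. real (\<tau> k) * real (\<tau> k))"
    by (simp add: power2_eq_square algebra_simps sum.distrib sum_subtractf sum_distrib_left)
  also have "(\<Sum>k\<in>UNIV. real (\<tau> k) * real (\<tau> k)) = (\<Sum>k\<in>UNIV. real (\<sigma> k) * real (\<sigma> k))"
    using rank_sum[OF assms(1), of "\<lambda>i. real i * real i"] rank_sum[OF assms(2), of "\<lambda>i. real i * real i"]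
    by simp
  finally show ?thesis by simp
qed

lemma finite_rankings: "finite (rankings :: ('n::finite \<Rightarrow> nat) set)"
proof -
  have "rankings \<subseteq> Pi\<^sub>E (UNIV::'n set) (\<lambda>_. {1..CARD('n)})"
    using rank_range[where 'n='n] by (auto simp: PiE_UNIV_domain)
  moreover have "finite (Pi\<^sub>E (UNIV::'n set) (\<lambda>_. {1..CARD('n)}))"
    by (rule finite_PiE) auto
  ultimately show ?thesis by (rule finite_subset)
qed

lemma half_count:
  fixes k :: "'n::finite"
  shows "2 * (\<Sum>r\<in>(UNIV::('n\<Rightarrow>bool) set). (if r k then c else 0::real)) = real CARD('n \<Rightarrow> bool) * c"
proof -
  let ?h = "\<lambda>(r::'n\<Rightarrow>bool) x. \<not> r x"
  have bij: "bij_betw ?h UNIV UNIV"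
    by (rule bij_betwI[where g = ?h]) auto
  have "(\<Sum>r\<in>(UNIV::('n\<Rightarrow>bool) set). (if r k then c else 0::real))
      = (\<Sum>r\<in>UNIV. (if ?h r k then c else 0))"
    using sum.reindex_bij_betw[OF bij, of "\<lambda>r. if r k then c else 0"] by simp
  then have "2 * (\<Sum>r\<in>(UNIV::('n\<Rightarrow>bool) set). (if r k then c else 0::real))
      = (\<Sum>r\<in>UNIV. (if r k then c else 0)) + (\<Sum>r\<in>UNIV. (if \<not> r k then c else 0))" by simp
  also have "\<dots> = (\<Sum>r\<in>(UNIV::('n\<Rightarrow>bool) set). c)"
    by (subst sum.distrib[symmetric]) (rule sum.cong, auto)
  finally show ?thesis by simp
qed

theorem lemma1:
  fixes \<sigma> :: "'n::finite \<Rightarrow> nat"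
  assumes "\<sigma> \<in> rankings"
  shows "pareto_optimal \<sigma>"
proof -
  define m where "m = CARD('n)"
  define N where "N = CARD('n \<Rightarrow> bool)"
  have m0: "m > 0" unfolding m_def by simp
  have N0: "N > 0" unfolding N_def by simp
  have Nm: "N = 2 ^ m" unfolding N_def m_def by (simp add: card_fun)
  define S where "S j = (\<lambda>k. \<sigma> k \<le> j)" for j
  define c where "c = 1 / (2 * real m)"
  define p0 :: "real ^ ('n \<Rightarrow> bool)" where
    "p0 = (\<chi> r. 1 / (2 * real N) + (\<Sum>j\<in>{1..m}. if r = S j then c else 0))"
  have delta: "(\<Sum>r\<in>UNIV. if r = S j then d else 0) = (d::real)" for j d
    by (simp add: sum.delta)
  have q: "(\<Sum>r\<in>UNIV. if r k then p0 $ r else 0) = 1/4 + (real m + 1 - real (\<sigma> k)) * c" for k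
  proof -
    have "(\<Sum>r\<in>UNIV. if r k then p0 $ r else 0)
       = (\<Sum>r\<in>UNIV. if r k then 1 / (2 * real N) else 0)
         + (\<Sum>r\<in>UNIV. \<Sum>j\<in>{1..m}. if r = S j then (if S j k then c else 0) else 0)"
      by (subst sum.distrib[symmetric], rule sum.cong) (auto simp: p0_def intro!: sum.neutral sum.cong)
    also have "(\<Sum>r\<in>UNIV. if r k then 1 / (2 * real N) else 0) = 1/4"
      using half_count[of k "1 / (2 * real N)"] N0 unfolding N_def by (simp add: field_simps)
    also have "(\<Sum>r\<in>UNIV. \<Sum>j\<in>{1..m}. if r = S j then (if S j k then c else 0) else 0)
        = (\<Sum>j\<in>{1..m}. if \<sigma> k \<le> j then c else 0)"
      by (subst sum.swap) (simp add: delta S_def)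
    also have "\<dots> = (\<Sum>j\<in>{j\<in>{1..m}. \<sigma> k \<le> j}. c)"
      by (rule sum.inter_filter[symmetric]) simp
    also have "{j\<in>{1..m}. \<sigma> k \<le> j} = {\<sigma> k..m}"
      using rank_range[OF assms, of k] unfolding m_def by auto
    also have "(\<Sum>j\<in>{\<sigma> k..m}. c) = (real m + 1 - real (\<sigma> k)) * c"
      using rank_range[OF assms, of k] unfolding m_def by (simp add: of_nat_diff)
    finally show ?thesis .
  qed
  define C where "C = (1/4 + (real m + 1) * c) * (\<Sum>i\<in>{1..m}. real i)"
  have f: "loss_row \<tau> \<bullet> p0 = C - c * (\<Sum>k\<in>UNIV. real (\<tau> k) * real (\<sigma> k))"
    if "\<tau> \<in> rankings" for \<tau>
  proof -
    have "loss_row \<tau> \<bullet> p0 = (\<Sum>k\<in>UNIV. real (\<tau> k) * (1/4 + (real m + 1 - real (\<sigma> k)) * c))"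
      by (simp add: loss_expand q)
    also have "\<dots> = (\<Sum>k\<in>UNIV. (1/4 + (real m + 1) * c) * real (\<tau> k) - c * (real (\<tau> k) * real (\<sigma> k)))"
      by (rule sum.cong) (auto simp: algebra_simps)
    also have "\<dots> = (1/4 + (real m + 1) * c) * (\<Sum>k\<in>UNIV. real (\<tau> k)) - c * (\<Sum>k\<in>UNIV. real (\<tau> k) * real (\<sigma> k))"
      by (simp add: sum_subtractf sum_distrib_left)
    also have "(\<Sum>k\<in>UNIV. real (\<tau> k)) = (\<Sum>i\<in>{1..m}. real i)"
      using rank_sum[OF that, of real] unfolding m_def .
    finally show ?thesis unfolding C_def .
  qed
  have c0: "c > 0" using m0 unfolding c_def by simp
  have strict: "loss_row \<sigma> \<bullet> p0 < loss_row \<tau> \<bullet> p0" if "\<tau> \<in> rankings" "\<tau> \<noteq> \<sigma>" for \<tau>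
    using f[OF that(1)] f[OF assms] rank_ineq[OF that(1) assms that(2)] c0 by simp
  have pos: "0 < p0 $ r" for r
  proof -
    have "0 \<le> (\<Sum>j\<in>{1..m}. if r = S j then c else 0)" using c0 by (intro sum_nonneg) auto
    then show ?thesis using N0 by (simp add: p0_def add_pos_nonneg)
  qed
  define one :: "real ^ ('n \<Rightarrow> bool)" where "one = (\<chi> r. 1)"
  have one_inner: "one \<bullet> p = (\<Sum>r\<in>UNIV. p $ r)" for p
    by (simp add: one_def inner_vec_def)
  have sum1: "(\<Sum>r\<in>UNIV. p0 $ r) = 1"
  proof -
    have "(\<Sum>r\<in>UNIV. p0 $ r) = (\<Sum>r\<in>(UNIV::('n\<Rightarrow>bool) set). 1 / (2 * real N))
         + (\<Sum>r\<in>UNIV. \<Sum>j\<in>{1..m}. if r = S j then c else 0)"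
      by (simp add: p0_def sum.distrib)
    also have "(\<Sum>r\<in>(UNIV::('n\<Rightarrow>bool) set). 1 / (2 * real N)) = 1/2"
      using N0 unfolding N_def by simp
    also have "(\<Sum>r\<in>UNIV. \<Sum>j\<in>{1..m}. if r = S j then c else 0) = real m * c"
      by (subst sum.swap) (simp add: delta)
    also have "real m * c = 1/2" using m0 unfolding c_def by simp
    finally show ?thesis by simp
  qed
  define H where "H = {x. one \<bullet> x = 1}"
  define U where "U = (\<Inter>r\<in>UNIV. {p::real ^ ('n \<Rightarrow> bool). 0 < p $ r}) \<inter>
      (\<Inter>\<tau>\<in>rankings - {\<sigma>}. {p. loss_row \<sigma> \<bullet> p < loss_row \<tau> \<bullet> p})"
  have openU: "open U"
    unfolding U_def
    by (intro open_Int open_INT ballI finite_Diff finite_rankings finite_UNIV open_Collect_less continuous_intros) auto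
  have p0U: "p0 \<in> H \<inter> U"
    unfolding H_def U_def using pos strict sum1 one_inner by auto
  have sub1: "H \<inter> U \<subseteq> cell \<sigma>"
    unfolding H_def U_def cell_def prob_simplex_def using one_inner
    by (auto simp: less_imp_le) (metis Diff_iff empty_iff insert_iff order.refl less_imp_le)
  have sub2: "cell \<sigma> \<subseteq> H"
    unfolding H_def cell_def prob_simplex_def using one_inner by auto
  have one0: "one \<noteq> 0" unfolding one_def by (metis vec_lambda_beta zero_index zero_neq_one)
  have affH: "aff_dim H = int N - 1"
    unfolding H_def using one0 by (simp add: N_def)
  have "aff_dim (H \<inter> U) = aff_dim H"
    using p0U openU by (intro aff_dim_convex_Int_open) (auto simp: H_def convex_hyperplane)
  then have "aff_dim (cell \<sigma>) = aff_dim H"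
    using aff_dim_subset[OF sub1] aff_dim_subset[OF sub2] by linarith
  moreover have "cell \<sigma> \<noteq> {}" using p0U sub1 by blast
  ultimately show ?thesis unfolding pareto_optimal_def affH Nm m_def by simp
qed

end
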